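(* Let $W=\sum_{j\in[n]}p_j\mathrm B(\varepsilon_j)\in\mathbb B_n^*$ and $Q=\sum_{i\in[m]}q_i\mathrm B(\sigma_i)\in\mathbb B_m^*$, with all $p_j,q_i>0$, $\sum_jp_j=\sum_iq_i=1$, $0\le\varepsilon_1<\cdots<\varepsilon_n\le1/2$ and $0\le\sigma_1<\cdots<\sigma_m\le1/2$. If $W\preccurlyeq Q$, then $\varepsilon_1\ge\sigma_1$. If moreover $W$ is a $2n$-P-degradation of $Q$, then $\varepsilon_n\le\sigma_m$.
   Context: A BIDMC $W$ has input uniform on $\{0,1\}$, discrete output alphabet $\mathcal Y$ and transition probabilities $\Pr(y\mid x)$; its LR-profile is $P_W(\varepsilon)=\Pr\big(\mathcal L_W(y)=\varepsilon/(1-\varepsilon)\big)$ with $\mathcal L_W(\hat y)=\Pr(y=\hat y\mid x=0)/\Pr(y=\hat y\mid x=1)$, and $W\cong W'$ if LR-profiles coincide. $W'\preccurlyeq W$ if there is a channel $T$ from the output alphabet of $W$ to that of $W'$ with $\Pr(y'\mid x'=a)=\sum_{y}\Pr(y\mid x=a)T(y'\mid y)$. $\mathrm B(\varepsilon)$ is the BSC with crossover probability $\varepsilon$; $\sum_iq_iW_i$ denotes the random switching channel (use $W_i$ with probability $q_i$ independently of the input and output the index $i$ along with the output). $\mathbb B_n$ is the set of BIDMCs equivalent to $\sum_{i\in[n]}p_i\mathrm B(\varepsilon_i)$ for a probability vector $(p_i)$ and $\varepsilon_i\in[0,1]$; $\mathbb B_n^*=\mathbb B_n\setminus\mathbb B_{n-1}$.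 $P_\epsilon(W)=\frac12\sum_{y}\min\{\Pr(y\mid x=0),\Pr(y\mid x=1)\}$. For a symmetric BIDMC $Q$ and $n\ge1$, $W$ is a $2n$-P-degradation of $Q$ if $W\in\mathbb B_n$, $W\preccurlyeq Q$ and $P_\epsilon(W)=\min\{P_\epsilon(W'):W'\in\mathbb B_n,\ W'\preccurlyeq Q\}$. *)

theory Defs
  imports Main "HOL-Library.Extended_Real"
begin

text \<open>A BIDMC is modelled as W :: nat => nat => real, where W a y = Pr(y | x = a)
  for inputs a in {0,1}; the output alphabet is a finite subset of nat (the support).\<close>

type_synonym channel = "nat \<Rightarrow> nat \<Rightarrow> real"

definition ch_supp :: "channel \<Rightarrow> nat set" where
  "ch_supp W = {y. W 0 y \<noteq> 0 \<or> W 1 y \<noteq> 0}"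

definition is_bidmc :: "channel \<Rightarrow> bool" where
  "is_bidmc W \<longleftrightarrow> (\<forall>a\<in>{0,1}. \<forall>y. W a y \<ge> 0) \<and> finite (ch_supp W)
     \<and> (\<forall>a\<in>{0,1}. (\<Sum>y\<in>ch_supp W. W a y) = 1)"

text \<open>LR-profile: P_W(e) = Pr(L_W(y) = e/(1-e)) under uniform input. The event
  L_W(y) = e/(1-e) (with the usual conventions for 0 and infinity) is exactly
  W 0 y / (W 0 y + W 1 y) = e for outputs of positive probability.\<close>
definition LR_profile :: "channel \<Rightarrow> real \<Rightarrow> real" where
  "LR_profile W e = (\<Sum>y\<in>{y\<in>ch_supp W. W 0 y / (W 0 y + W 1 y) = e}. (W 0 y + W 1 y) / 2)"

definition ch_equiv :: "channel \<Rightarrow> channel \<Rightarrow> bool" where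
  "ch_equiv W W' \<longleftrightarrow> (\<forall>e. LR_profile W e = LR_profile W' e)"

text \<open>degraded W' W  means  W' \<preccurlyeq> W.\<close>
definition degraded :: "channel \<Rightarrow> channel \<Rightarrow> bool" where
  "degraded W' W \<longleftrightarrow> (\<exists>T :: nat \<Rightarrow> nat \<Rightarrow> real.
     (\<forall>y\<in>ch_supp W. (\<forall>y'. T y y' \<ge> 0) \<and> finite {y'. T y y' \<noteq> 0}
                      \<and> (\<Sum>y'\<in>{y'. T y y' \<noteq> 0}. T y y') = 1)
     \<and> (\<forall>a\<in>{0,1}. \<forall>y'. W' a y' = (\<Sum>y\<in>ch_supp W. W a y * T y y')))"

text \<open>Random switching channel sum_{i<n} p_i B(eps_i); output (i,b) encoded as 2*i+b.\<close>
definition bsc_mix :: "nat \<Rightarrow> (nat \<Rightarrow> real) \<Rightarrow> (nat \<Rightarrow> real) \<Rightarrow> channel" where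
  "bsc_mix n p eps = (\<lambda>a y. if y < 2 * n
      then p (y div 2) * (if y mod 2 = a then 1 - eps (y div 2) else eps (y div 2))
      else 0)"

definition prob_vec :: "nat \<Rightarrow> (nat \<Rightarrow> real) \<Rightarrow> bool" where
  "prob_vec n p \<longleftrightarrow> (\<forall>i<n. p i \<ge> 0) \<and> (\<Sum>i<n. p i) = 1"

definition in_B :: "nat \<Rightarrow> channel \<Rightarrow> bool" where
  "in_B n W \<longleftrightarrow> is_bidmc W \<and> (\<exists>p eps. prob_vec n p \<and> (\<forall>i<n. 0 \<le> eps i \<and> eps i \<le> 1)
       \<and> ch_equiv W (bsc_mix n p eps))"

definition in_B_star :: "nat \<Rightarrow> channel \<Rightarrow> bool" where
  "in_B_star n W \<longleftrightarrow> in_B n W \<and> \<not> in_B (n - 1) W"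

definition P_err :: "channel \<Rightarrow> real" where
  "P_err W = (1/2) * (\<Sum>y\<in>ch_supp W. min (W 0 y) (W 1 y))"

definition P_degradation :: "nat \<Rightarrow> channel \<Rightarrow> channel \<Rightarrow> bool" where
  "P_degradation n W Q \<longleftrightarrow> in_B n W \<and> degraded W Q \<and>
     (\<forall>W'. in_B n W' \<and> degraded W' Q \<longrightarrow> P_err W \<le> P_err W')"

end

theory Submission
  imports Defs
begin

lemma mono_seq:
  fixes e :: "nat \<Rightarrow> real"
  assumes "\<forall>j. Suc j < n \<longrightarrow> e j < e (Suc j)"
  shows "j \<le> k \<Longrightarrow> k < n \<Longrightarrow> e j \<le> e k"
proof (induction k)
  case 0 then show ?case by simp
next
  case (Suc k)
  show ?case
  proof (cases "j = Suc k")
    case False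
    then have "e j \<le> e k" using Suc by simp
    moreover have "e k < e (Suc k)" using assms Suc.prems by blast
    ultimately show ?thesis by simp
  qed simp
qed

lemma sum2: "(\<Sum>y<2*(n::nat). f y) = (\<Sum>j<n. f (2*j) + f (2*j+1))"
  by (induction n) (simp_all add: algebra_simps)

lemma bsc_even: "bsc_mix n p e a (2*j) = (if j < n then p j * (if a = 0 then 1 - e j else e j) else 0)"
  unfolding bsc_mix_def by (cases "a = 0") simp_all

lemma bsc_odd: "bsc_mix n p e a (2*j+1) = (if j < n then p j * (if a = 1 then 1 - e j else e j) else 0)"
  unfolding bsc_mix_def by (cases "a = 1") simp_all

lemma bsc_big: "y \<ge> 2*n \<Longrightarrow> bsc_mix n p e a y = 0"
  unfolding bsc_mix_def by simp

lemma bsc_supp: "ch_supp (bsc_mix n p e) \<subseteq> {..<2*n}"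
  unfolding ch_supp_def bsc_mix_def by (auto split: if_splits)

lemma bsc_supp_fin: "finite (ch_supp (bsc_mix n p e))"
  by (rule finite_subset[OF bsc_supp]) simp

lemma supp_sum:
  assumes "\<forall>y. bsc_mix n p e 0 y = 0 \<and> bsc_mix n p e 1 y = 0 \<longrightarrow> h y = 0"
  shows "sum h (ch_supp (bsc_mix n p e)) = sum h {..<2*n}"
  apply (rule sum.mono_neutral_left)
  using bsc_supp assms by (auto simp: ch_supp_def)

lemma bsc_nonneg:
  assumes "\<forall>j<n. p j \<ge> 0 \<and> 0 \<le> e j \<and> e j \<le> 1"
  shows "bsc_mix n p e a y \<ge> 0"
proof (cases "y < 2*n")
  case True
  then have j: "y div 2 < n" by simp
  have "0 \<le> p (y div 2)" "0 \<le> e (y div 2)" "e (y div 2) \<le> 1" using assms j by auto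
  then have "0 \<le> (if y mod 2 = a then 1 - e (y div 2) else e (y div 2))" by simp
  then show ?thesis unfolding bsc_mix_def using True \<open>0 \<le> p (y div 2)\<close> by simp
qed (simp add: bsc_mix_def)

lemma min_lem:
  fixes p e :: real
  assumes "0 \<le> p" "0 \<le> e" "e \<le> 1/2"
  shows "min (p*(1-e)) (p*e) + min (p*e) (p*(1-e)) = 2*(p*e)"
proof -
  have "p * e \<le> p * (1 - e)" using assms by (intro mult_left_mono) auto
  then show ?thesis by (simp add: min_absorb1 min_absorb2)
qed

lemma bsc_Perr:
  assumes "\<forall>j<n. p j \<ge> 0 \<and> 0 \<le> e j \<and> e j \<le> 1/2"
  shows "P_err (bsc_mix n p e) = (\<Sum>j<n. p j * e j)"
proof -
  have "P_err (bsc_mix n p e) = (1/2) * (\<Sum>y<2*n. min (bsc_mix n p e 0 y) (bsc_mix n p e 1 y))"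
    unfolding P_err_def by (subst supp_sum) auto
  also have "\<dots> = (1/2) * (\<Sum>j<n. 2 * (p j * e j))"
    unfolding sum2 bsc_even bsc_odd
    apply (rule arg_cong[where f="\<lambda>x. (1/2) * x"])
    apply (rule sum.cong, simp)
    using assms min_lem by simp
  finally show ?thesis by (simp add: sum_distrib_left)
qed


theorem lemma4:
  fixes n m :: nat and p eps q sig :: "nat \<Rightarrow> real" and W Q :: channel
  assumes "n \<ge> 1" and "m \<ge> 1"
    and W_def: "W = bsc_mix n p eps" and Q_def: "Q = bsc_mix m q sig"
    and "in_B_star n W" and "in_B_star m Q"
    and "\<forall>j<n. p j > 0" and "(\<Sum>j<n. p j) = 1"
    and "\<forall>i<m. q i > 0" and "(\<Sum>i<m. q i) = 1"
    and "0 \<le> eps 0" and "\<forall>j. Suc j < n \<longrightarrow> eps j < eps (Suc j)" and "eps (n - 1) \<le> 1/2"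
    and "0 \<le> sig 0" and "\<forall>i. Suc i < m \<longrightarrow> sig i < sig (Suc i)" and "sig (m - 1) \<le> 1/2"
  shows "(degraded W Q \<longrightarrow> eps 0 \<ge> sig 0)
       \<and> (P_degradation n W Q \<longrightarrow> eps (n - 1) \<le> sig (m - 1))"
proof -
  note a = assms
  have epsb: "eps 0 \<le> eps j \<and> eps j \<le> eps (n-1)" if "j < n" for j
    using mono_seq[OF a(12)] that by simp
  have sigb: "sig 0 \<le> sig i \<and> sig i \<le> sig (m-1)" if "i < m" for i
    using mono_seq[OF a(15)] that by simp
  have epsr: "0 \<le> eps j \<and> eps j \<le> 1/2" if "j < n" for j
    using epsb[OF that] a(11,13) by linarith
  have sigr: "0 \<le> sig i \<and> sig i \<le> 1/2" if "i < m" for i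
    using sigb[OF that] a(14,16) by linarith
  define S where "S = ch_supp Q"
  have finS: "finite S" unfolding S_def Q_def by (rule bsc_supp_fin)
  have Qnn: "Q b y \<ge> 0" for b y unfolding Q_def
    by (rule bsc_nonneg) (use a(9) sigr in force)
  have Wnn: "W b y \<ge> 0" for b y unfolding W_def
    by (rule bsc_nonneg) (use a(7) epsr in force)
  have Q0ev: "Q 0 (2*i) = (if i < m then q i * (1 - sig i) else 0)" for i
    unfolding Q_def bsc_even by simp
  have Q1ev: "Q 1 (2*i) = (if i < m then q i * sig i else 0)" for i
    unfolding Q_def bsc_even by simp
  have Q0od: "Q 0 (2*i+1) = (if i < m then q i * sig i else 0)" for i
    unfolding Q_def bsc_odd by simp
  have Q1od: "Q 1 (2*i+1) = (if i < m then q i * (1 - sig i) else 0)" for i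
    unfolding Q_def bsc_odd by simp
  have Qbig: "y \<ge> 2*m \<Longrightarrow> Q b y = 0" for b y unfolding Q_def by (rule bsc_big)
  have Qcases: "(\<exists>i<m. y = 2*i \<and> Q 0 y = q i * (1 - sig i) \<and> Q 1 y = q i * sig i)
     \<or> (\<exists>i<m. y = 2*i+1 \<and> Q 0 y = q i * sig i \<and> Q 1 y = q i * (1 - sig i))
     \<or> (Q 0 y = 0 \<and> Q 1 y = 0)" for y
  proof (cases "y < 2*m")
    case True
    obtain i where "y = 2*i \<or> y = 2*i+1" by (metis dvd_mult_div_cancel odd_two_times_div_two_succ)
    then show ?thesis using True Q0ev Q1ev Q0od Q1od by auto
  qed (use Qbig in auto)
  have W0od: "W 0 (2*j+1) = p j * eps j" if "j < n" for j
    unfolding W_def bsc_odd using that by simp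
  have W1od: "W 1 (2*j+1) = p j * (1 - eps j)" if "j < n" for j
    unfolding W_def bsc_odd using that by simp
  have W1ev: "W 1 (2*j) = p j * eps j" if "j < n" for j
    unfolding W_def bsc_even using that by simp
  show ?thesis
  proof (intro conjI impI)
    assume "degraded W Q"
    then obtain T where T1: "\<forall>y\<in>S. (\<forall>y'. T y y' \<ge> 0) \<and> finite {y'. T y y' \<noteq> 0}
                      \<and> (\<Sum>y'\<in>{y'. T y y' \<noteq> 0}. T y y') = 1"
      and T2: "\<forall>b\<in>{0,1}. \<forall>y'. W b y' = (\<Sum>y\<in>S. Q b y * T y y')"
      unfolding degraded_def S_def by blast
    have key: "Q 0 y \<ge> sig 0 * (Q 0 y + Q 1 y)" for y
    proof -
      consider (e) i where "i<m" "Q 0 y = q i * (1 - sig i)" "Q 1 y = q i * sig i"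
        | (o) i where "i<m" "Q 0 y = q i * sig i" "Q 1 y = q i * (1 - sig i)"
        | (z) "Q 0 y = 0" "Q 1 y = 0" using Qcases[of y] by blast
      then show ?thesis
      proof cases
        case e
        have "sig 0 * q i \<le> (1 - sig i) * q i"
          using sigb[OF e(1)] sigr[OF e(1)] a(9) e(1) by (intro mult_right_mono) auto
        then show ?thesis using e by (simp add: algebra_simps)
      next
        case o
        have "sig 0 * q i \<le> sig i * q i"
          using sigb[OF o(1)] a(9) o(1) by (intro mult_right_mono) auto
        then show ?thesis using o by (simp add: algebra_simps)
      qed simp
    qed
    have "W 0 1 - sig 0 * (W 0 1 + W 1 1) = (\<Sum>y\<in>S. (Q 0 y - sig 0 * (Q 0 y + Q 1 y)) * T y 1)"
      using T2 by (simp add: sum_distrib_left sum_subtractf sum.distrib algebra_simps)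
    also have "\<dots> \<ge> 0"
      by (rule sum_nonneg) (use key T1 in auto)
    finally have f1: "W 0 1 - sig 0 * (W 0 1 + W 1 1) \<ge> 0" .
    have "W 0 1 = p 0 * eps 0" "W 1 1 = p 0 * (1 - eps 0)"
      using W0od[of 0] W1od[of 0] a(1) by auto
    then have "W 0 1 + W 1 1 = p 0" by (simp add: algebra_simps)
    then have "p 0 * eps 0 - sig 0 * p 0 \<ge> 0" using f1 \<open>W 0 1 = p 0 * eps 0\<close> by simp
    then show "eps 0 \<ge> sig 0" using a(1,7)
      by (metis diff_ge_0_iff_ge less_le_trans mult.commute mult_le_cancel_left_pos zero_less_one le_less)
  next
    assume Pd: "P_degradation n W Q"
    define M where "M = sig (m-1)"
    define s where "s = (\<Sum>i<m. q i * sig i)"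
    show "eps (n - 1) \<le> M"
    proof (rule ccontr)
      assume "\<not> eps (n - 1) \<le> M"
      then have gt: "eps (n-1) > M" by simp
      have "degraded W Q" using Pd unfolding P_degradation_def by blast
      then obtain T where T1: "\<forall>y\<in>S. (\<forall>y'. T y y' \<ge> 0) \<and> finite {y'. T y y' \<noteq> 0}
                        \<and> (\<Sum>y'\<in>{y'. T y y' \<noteq> 0}. T y y') = 1"
        and T2: "\<forall>b\<in>{0,1}. \<forall>y'. W b y' = (\<Sum>y\<in>S. Q b y * T y y')"
        unfolding degraded_def S_def by blast
      have Tsum: "(\<Sum>y'<2*n. T y y') = 1" if yS: "y \<in> S" for y
      proof -
        have sub: "{y'. T y y' \<noteq> 0} \<subseteq> {..<2*n}"
        proof
          fix y' assume "y' \<in> {y'. T y y' \<noteq> 0}"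
          then have Tn: "T y y' \<noteq> 0" by simp
          show "y' \<in> {..<2*n}"
          proof (rule ccontr)
            assume "y' \<notin> {..<2*n}"
            then have big: "W b y' = 0" for b unfolding W_def by (intro bsc_big) auto
            have z: "Q b y * T y y' = 0" if "b \<in> {0,1}" for b
            proof -
              have "W b y' = (\<Sum>y\<in>S. Q b y * T y y')" using T2 that by blast
              then have s0: "(\<Sum>y\<in>S. Q b y * T y y') = 0" using big[of b] by simp
              have nn: "0 \<le> Q b x * T x y'" if "x \<in> S" for x
              proof -
                from that have "T x y' \<ge> 0" using T1 by blast
                then show "0 \<le> Q b x * T x y'" using Qnn[of b x] by simp
              qed
              have "\<forall>x\<in>S. Q b x * T x y' = 0"
                using iffD1[OF sum_nonneg_eq_0_iff[OF finS nn] s0] .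
              then show ?thesis using yS by blast
            qed
            have "Q 0 y = 0" "Q 1 y = 0" using z[of 0] z[of 1] Tn by auto
            then show False using yS unfolding S_def ch_supp_def by auto
          qed
        qed
        have "(\<Sum>y'<2*n. T y y') = (\<Sum>y'\<in>{y'. T y y' \<noteq> 0}. T y y')"
          by (rule sum.mono_neutral_right) (use sub in auto)
        then show ?thesis using T1 yS by simp
      qed
      define mn where "mn y = min (Q 0 y) (Q 1 y)" for y
      have mnkey: "mn y \<le> M * (Q 0 y + Q 1 y)" for y
      proof -
        consider (e) i where "i<m" "Q 0 y = q i * (1 - sig i)" "Q 1 y = q i * sig i"
          | (o) i where "i<m" "Q 0 y = q i * sig i" "Q 1 y = q i * (1 - sig i)"
          | (z) "Q 0 y = 0" "Q 1 y = 0" using Qcases[of y] by blast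
        then show ?thesis
        proof cases
          case e
          have "sig i * q i \<le> M * q i"
            using sigb[OF e(1)] a(9) e(1) unfolding M_def by (intro mult_right_mono) auto
          then show ?thesis using e unfolding mn_def by (simp add: algebra_simps min_def)
        next
          case o
          have "sig i * q i \<le> M * q i"
            using sigb[OF o(1)] a(9) o(1) unfolding M_def by (intro mult_right_mono) auto
          then show ?thesis using o unfolding mn_def by (simp add: algebra_simps min_def)
        qed (simp add: mn_def)
      qed
      have B: "(\<Sum>j<n. Q 0 y * T y (2*j+1) + Q 1 y * T y (2*j))
          \<ge> mn y + (Q 0 y - M * (Q 0 y + Q 1 y)) * T y (2*(n-1)+1)" if yS: "y \<in> S" for y
      proof -
        have Tnn: "T y y' \<ge> 0" for y' using T1 yS by blast
        have m0: "mn y \<le> Q 0 y" "mn y \<le> Q 1 y" unfolding mn_def by auto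
        have "(\<Sum>j<n. Q 0 y * T y (2*j+1) + Q 1 y * T y (2*j))
            = (\<Sum>j<n. mn y * (T y (2*j) + T y (2*j+1)))
              + (\<Sum>j<n. (Q 0 y - mn y) * T y (2*j+1) + (Q 1 y - mn y) * T y (2*j))"
          by (simp add: sum.distrib[symmetric] algebra_simps)
        also have "(\<Sum>j<n. mn y * (T y (2*j) + T y (2*j+1))) = mn y"
          using Tsum[OF yS] by (simp add: sum2 sum_distrib_left[symmetric])
        also have "(\<Sum>j<n. (Q 0 y - mn y) * T y (2*j+1) + (Q 1 y - mn y) * T y (2*j))
            \<ge> (Q 0 y - mn y) * T y (2*(n-1)+1) + (Q 1 y - mn y) * T y (2*(n-1))"
          by (rule member_le_sum[where f="\<lambda>j. (Q 0 y - mn y) * T y (2*j+1) + (Q 1 y - mn y) * T y (2*j)"])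
             (use a(1) m0 Tnn in auto)
        moreover have "(Q 1 y - mn y) * T y (2*(n-1)) \<ge> 0" using m0 Tnn by simp
        moreover have "(Q 0 y - mn y) * T y (2*(n-1)+1) \<ge> (Q 0 y - M * (Q 0 y + Q 1 y)) * T y (2*(n-1)+1)"
          using mnkey[of y] Tnn by (intro mult_right_mono) auto
        ultimately show ?thesis by linarith
      qed
      have A: "2 * (\<Sum>j<n. p j * eps j) = (\<Sum>y\<in>S. \<Sum>j<n. Q 0 y * T y (2*j+1) + Q 1 y * T y (2*j))"
      proof -
        have "2 * (\<Sum>j<n. p j * eps j) = (\<Sum>j<n. W 0 (2*j+1) + W 1 (2*j))"
          unfolding sum_distrib_left by (rule sum.cong) (use W0od W1ev in auto)
        also have "\<dots> = (\<Sum>j<n. \<Sum>y\<in>S. Q 0 y * T y (2*j+1) + Q 1 y * T y (2*j))"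
          using T2 by (simp add: sum.distrib)
        also have "\<dots> = (\<Sum>y\<in>S. \<Sum>j<n. Q 0 y * T y (2*j+1) + Q 1 y * T y (2*j))"
          by (rule sum.swap)
        finally show ?thesis .
      qed
      have C: "(\<Sum>y\<in>S. mn y) = 2 * s"
      proof -
        have "(\<Sum>y\<in>S. mn y) = (\<Sum>y<2*m. mn y)"
          unfolding S_def Q_def by (rule supp_sum) (auto simp: mn_def Q_def)
        also have "\<dots> = (\<Sum>i<m. 2 * (q i * sig i))"
          unfolding sum2
        proof (rule sum.cong)
          fix i assume "i \<in> {..<m}"
          then have i: "i < m" by simp
          have "q i * sig i \<le> q i * (1 - sig i)"
            using sigr[OF i] a(9) i by (intro mult_left_mono) auto
          then show "mn (2*i) + mn (2*i+1) = 2 * (q i * sig i)"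
            unfolding mn_def Q0ev Q1ev Q0od Q1od using i by (simp add: min_def)
        qed simp
        finally show ?thesis unfolding s_def by (simp add: sum_distrib_left)
      qed
      have D: "(\<Sum>y\<in>S. (Q 0 y - M * (Q 0 y + Q 1 y)) * T y (2*(n-1)+1))
               = p (n-1) * eps (n-1) - M * p (n-1)"
      proof -
        have "(\<Sum>y\<in>S. (Q 0 y - M * (Q 0 y + Q 1 y)) * T y (2*(n-1)+1))
             = W 0 (2*(n-1)+1) - M * (W 0 (2*(n-1)+1) + W 1 (2*(n-1)+1))"
          using T2 by (simp add: sum_distrib_left sum_subtractf sum.distrib algebra_simps)
        moreover have "W 0 (2*(n-1)+1) = p (n-1) * eps (n-1)" "W 1 (2*(n-1)+1) = p (n-1) * (1 - eps (n-1))"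
          using W0od[of "n-1"] W1od[of "n-1"] a(1) by auto
        moreover have "p (n-1) * eps (n-1) + p (n-1) * (1 - eps (n-1)) = p (n-1)"
          by (simp add: algebra_simps)
        ultimately show ?thesis by simp
      qed
      have X: "2 * (\<Sum>j<n. p j * eps j) \<ge> (\<Sum>y\<in>S. mn y + (Q 0 y - M * (Q 0 y + Q 1 y)) * T y (2*(n-1)+1))"
        unfolding A by (rule sum_mono) (use B in auto)
      have Y: "(\<Sum>y\<in>S. mn y + (Q 0 y - M * (Q 0 y + Q 1 y)) * T y (2*(n-1)+1)) = 2 * s + (p (n-1) * eps (n-1) - M * p (n-1))"
        unfolding sum.distrib C D ..
      have ineq1: "2 * (\<Sum>j<n. p j * eps j) \<ge> 2 * s + p (n-1) * (eps (n-1) - M)"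
        using X Y by (simp add: algebra_simps)
      have "p (n-1) * (eps (n-1) - M) > 0" using gt a(1,7) by simp
      with ineq1 have PWgt: "P_err W > s"
        unfolding W_def by (subst bsc_Perr) (use a(7) epsr in force, linarith)
      define p' where "p' = (\<lambda>j::nat. if j = 0 then 1 else (0::real))"
      define W' where "W' = bsc_mix n p' (\<lambda>_. s)"
      have s0: "0 \<le> s" unfolding s_def
        by (rule sum_nonneg) (use a(9) sigr in force)
      have s1: "s \<le> 1/2"
      proof -
        have "s \<le> (\<Sum>i<m. q i * (1/2))" unfolding s_def
          by (rule sum_mono) (use a(9) sigr in \<open>auto intro!: mult_left_mono\<close>)
        also have "(\<Sum>i<m. q i * (1/2)) = (\<Sum>i<m. q i) * (1/2)" by (rule sum_distrib_right[symmetric])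
        finally show ?thesis using a(10) by simp
      qed
      have p'n: "(\<Sum>j<n. p' j) = 1" unfolding p'_def using a(1) by simp
      have PW': "P_err W' = s"
      proof -
        have "P_err W' = (\<Sum>j<n. p' j * s)"
          unfolding W'_def by (rule bsc_Perr) (use s0 s1 in \<open>auto simp: p'_def\<close>)
        also have "\<dots> = (\<Sum>j<n. p' j) * s" by (rule sum_distrib_right[symmetric])
        finally show ?thesis using p'n by simp
      qed
      have inB: "in_B n W'"
      proof -
        have bid: "is_bidmc W'"
          unfolding is_bidmc_def
        proof (intro conjI ballI allI)
          fix b y show "0 \<le> W' b y" unfolding W'_def
            by (rule bsc_nonneg) (use s0 s1 in \<open>auto simp: p'_def\<close>)
        next
          show "finite (ch_supp W')" unfolding W'_def by (rule bsc_supp_fin)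
        next
          fix b :: nat assume b: "b \<in> {0,1}"
          have "(\<Sum>y\<in>ch_supp W'. W' b y) = (\<Sum>y<2*n. W' b y)"
            unfolding W'_def by (rule supp_sum) (use b in auto)
          also have "\<dots> = (\<Sum>j<n. p' j)"
            unfolding sum2 W'_def bsc_even bsc_odd
          proof (rule sum.cong)
            fix j assume "j \<in> {..<n}"
            then have "j < n" by simp
            then show "(if j < n then p' j * (if b = 0 then 1 - s else s) else 0) +
                (if j < n then p' j * (if b = 1 then 1 - s else s) else 0) = p' j"
              using b by (cases "b = 0") (simp_all add: algebra_simps)
          qed simp
          finally show "(\<Sum>y\<in>ch_supp W'. W' b y) = 1" using p'n by simp
        qed
        have pv: "prob_vec n p'" unfolding prob_vec_def using p'n by (auto simp: p'_def)
        have rg: "\<forall>i<n. 0 \<le> (\<lambda>_. s) i \<and> (\<lambda>_. s) i \<le> (1::real)" using s0 s1 by auto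
        have eq: "ch_equiv W' (bsc_mix n p' (\<lambda>_. s))" unfolding W'_def ch_equiv_def by simp
        show ?thesis unfolding in_B_def
          by (intro conjI bid exI[of _ p'] exI[of _ "\<lambda>_. s"] pv rg eq)
      qed
      have deg: "degraded W' Q"
        unfolding degraded_def
      proof (intro exI[of _ "\<lambda>y y'. if y' = y mod 2 then (1::real) else 0"] conjI ballI allI)
        fix y assume "y \<in> ch_supp Q"
        have e: "{y'. (if y' = y mod 2 then (1::real) else 0) \<noteq> 0} = {y mod 2}" by auto
        show "finite {y'. (if y' = y mod 2 then (1::real) else 0) \<noteq> 0}" unfolding e by simp
        show "(\<Sum>y'\<in>{y'. (if y' = y mod 2 then (1::real) else 0) \<noteq> 0}. if y' = y mod 2 then 1 else 0) = 1"
          unfolding e by simp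
        fix y' show "0 \<le> (if y' = y mod 2 then (1::real) else 0)" by simp
      next
        fix b :: nat and y' assume b: "b \<in> {0,1}"
        have "(\<Sum>y\<in>ch_supp Q. Q b y * (if y' = y mod 2 then 1 else 0))
            = (\<Sum>y<2*m. Q b y * (if y' = y mod 2 then 1 else 0))"
          unfolding Q_def by (rule supp_sum) (use b in auto)
        also have "\<dots> = (\<Sum>i<m. Q b (2*i) * (if y' = 0 then 1 else 0) + Q b (2*i+1) * (if y' = 1 then 1 else 0))"
          unfolding sum2 by simp
        finally have R: "(\<Sum>y\<in>ch_supp Q. Q b y * (if y' = y mod 2 then 1 else 0)) = \<dots>" .
        have sq: "(\<Sum>i<m. q i * (1 - sig i)) = 1 - s"
          unfolding s_def using a(10) by (simp add: algebra_simps sum_subtractf)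
        consider "y' = 0" | "y' = 1" | "y' \<ge> 2" by linarith
        then show "W' b y' = (\<Sum>y\<in>ch_supp Q. Q b y * (if y' = y mod 2 then 1 else 0))"
        proof cases
          case 1
          have "(\<Sum>i<m. Q b (2*i)) = (\<Sum>i<m. if b = 0 then q i * (1 - sig i) else q i * sig i)"
            unfolding Q_def bsc_even by (rule sum.cong) auto
          moreover have "W' b 0 = (if b = 0 then 1 - s else s)"
            using bsc_even[of n p' "\<lambda>_. s" b 0] a(1) unfolding W'_def p'_def by simp
          ultimately show ?thesis unfolding R using 1 b sq s_def by auto
        next
          case 2
          have "(\<Sum>i<m. Q b (2*i+1)) = (\<Sum>i<m. if b = 1 then q i * (1 - sig i) else q i * sig i)"
            unfolding Q_def bsc_odd by (rule sum.cong) auto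
          moreover have "W' b 1 = (if b = 1 then 1 - s else s)"
            using bsc_odd[of n p' "\<lambda>_. s" b 0] a(1) unfolding W'_def p'_def by simp
          ultimately show ?thesis unfolding R using 2 b sq s_def by auto
        next
          case 3
          then have "W' b y' = 0" unfolding W'_def bsc_mix_def p'_def by auto
          then show ?thesis unfolding R using 3 by simp
        qed
      qed
      have "P_err W \<le> P_err W'" using Pd inB deg unfolding P_degradation_def by blast
      then show False using PWgt PW' by simp
    qed
  qed
qed

end
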